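(* Let $\varphi$ be an individually rational rule. There exists a pick-an-object mechanism (i.e. a menu function $\mathbb{S}$) that sequentializes $\varphi$ if and only if $\varphi$ satisfies monotonic discoverability.
   Context: Let $A=\{a_1,\dots,a_n\}$ be a finite set of agents and $O=\{o_1,\dots,o_m\}\cup\{\emptyset\}$ a finite set of object types, where $\emptyset$ is the null object. Each agent $a$ has a strict preference $P_a$ (a linear order) over $O$, with weak version $R_a$ ($oR_ao'$ iff $oP_ao'$ or $o=o'$). $\mathbb{P}$ is the set of strict preferences over $O$, $\mathcal{P}=\mathbb{P}^n$ the set of preference profiles $P=(P_{a_1},\dots,P_{a_n})$. An allocation is any function $\mu:A\to O$; $\mathcal{M}$ is the set of allocations. A rule is a function $\varphi:\mathcal{P}\to\mathcal{M}$, with $\varphi_a(P)=\varphi(P)(a)$. $\varphi$ is individually rational if $\varphi_a(P)\,R_a\,\emptyset$ for all $P\in\mathcal{P}$, $a\in A$. Lower contour set: for $P\in\mathcal{P}$ and an allocation $\mu$, $\mathcal{L}(P,\mu)$ is the set of profiles $P'\in\mathcal{P}$ such that, for every agent $a$, $P'_a$ agrees with $P_a$ on $\mu(a)$ and on all objects that $P_a$ ranks above $\mu(a)$ (the same objects are ranked above $\mu(a)$, in the same order), while $P'_a$ may differ arbitrarily on objects ranked below $\mu(a)$ by $P_a$. A rule $\varphi$ satisfies monotonic discoverability if for every allocation $\mu$ and every $P\in\mathcal{P}$, either $\varphi(P)=\mu$, or there is an agent $a^*\in A$ such that $\varphi_{a^*}(P')\neq\mu(a^* )$ for all $P'\in\mathcal{L}(P,\mu)$.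 Pick-an-object mechanisms: a choice history is a finite (possibly empty) sequence $h=((\Omega_1,\omega_1),\dots,(\Omega_k,\omega_k))$ with $\Omega_j\subseteq O$ and $\omega_j\in\Omega_j$; its last choice is $\omega_k$. A preference $P_a$ is consistent with $h$ if $\omega_j R_a o$ for all $j$ and all $o\in\Omega_j$. A collective history $h^A=(h_1,\dots,h_n)$ is an $n$-tuple of choice histories (one per agent); $h^{A-\emptyset}$ denotes the tuple of empty histories. A menu function $\mathbb{S}$ assigns to each collective history an $n$-tuple of subsets of $O$ (menus) such that all menus in $\mathbb{S}(h^{A-\emptyset})$ are non-empty, and for any other collective history $h^A$ in which agent $i$'s history ends with $(\Omega_k,\omega_k)$, agent $i$'s menu is a subset of $\Omega_k\setminus\{\omega_k\}$. The pick-an-object mechanism $\mathbb{S}$ runs as follows: in period 1 every agent chooses one element from her menu in $\mathbb{S}(h^{A-\emptyset})$, and (menu, choice) is appended to her history. In each period $t>1$, with current collective history $h^A$, if every menu in $\mathbb{S}(h^A)$ is empty the procedure stops and each agent is assigned the last object she chose; otherwise each agent with a non-empty menu chooses one element of it and (menu, choice) is appended to her history, while agents with empty menus make no choice. An agent follows the straightforward strategy with respect to $P_a$ if whenever presented with a menu she chooses its $P_a$-most-preferred element. $\mathbb{S}$ sequentializes $\varphi$ if for every $P\in\mathcal{P}$, when every agent $a$ follows the straightforward strategy with respect to $P_a$, the mechanism outputs $\varphi(P)$. *)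

theory Defs
  imports Main
begin

text \<open>Objects: the type 'o option, where None is the null object and Some o are the
  object types o_1..o_m. Agents: a finite type 'ag.\<close>

type_synonym 'o obj = "'o option"

text \<open>A strict preference P over objects: P x y means x is strictly preferred to y.\<close>
type_synonym 'o pref = "'o obj \<Rightarrow> 'o obj \<Rightarrow> bool"

definition strict_pref :: "'o pref \<Rightarrow> bool" where
  "strict_pref P \<longleftrightarrow> (\<forall>x. \<not> P x x) \<and> (\<forall>x y z. P x y \<longrightarrow> P y z \<longrightarrow> P x z)
     \<and> (\<forall>x y. x \<noteq> y \<longrightarrow> P x y \<or> P y x)"

definition weak_pref :: "'o pref \<Rightarrow> 'o obj \<Rightarrow> 'o obj \<Rightarrow> bool" where
  "weak_pref P x y \<longleftrightarrow> P x y \<or> x = y"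

type_synonym ('ag, 'o) profile = "'ag \<Rightarrow> 'o pref"
type_synonym ('ag, 'o) allocation = "'ag \<Rightarrow> 'o obj"
type_synonym ('ag, 'o) rule = "('ag, 'o) profile \<Rightarrow> ('ag, 'o) allocation"

definition is_profile :: "('ag, 'o) profile \<Rightarrow> bool" where
  "is_profile P \<longleftrightarrow> (\<forall>a. strict_pref (P a))"

definition individually_rational :: "('ag, 'o) rule \<Rightarrow> bool" where
  "individually_rational \<phi> \<longleftrightarrow> (\<forall>P a. is_profile P \<longrightarrow> weak_pref (P a) (\<phi> P a) None)"

definition lower_contour :: "('ag, 'o) profile \<Rightarrow> ('ag, 'o) allocation \<Rightarrow> ('ag, 'o) profile set" where
  "lower_contour P \<mu> = {P'. is_profile P' \<and>
     (\<forall>a. {x. P' a x (\<mu> a)} = {x. P a x (\<mu> a)} \<and>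
          (\<forall>x y. P a x (\<mu> a) \<longrightarrow> P a y (\<mu> a) \<longrightarrow> (P' a x y \<longleftrightarrow> P a x y)))}"

definition monotonic_discoverability :: "('ag, 'o) rule \<Rightarrow> bool" where
  "monotonic_discoverability \<phi> \<longleftrightarrow>
     (\<forall>\<mu> P. is_profile P \<longrightarrow>
        \<phi> P = \<mu> \<or> (\<exists>a. \<forall>P' \<in> lower_contour P \<mu>. \<phi> P' a \<noteq> \<mu> a))"

type_synonym 'o history = "('o obj set \<times> 'o obj) list"
type_synonym ('ag, 'o) coll_history = "'ag \<Rightarrow> 'o history"
type_synonym ('ag, 'o) menu_fun = "('ag, 'o) coll_history \<Rightarrow> 'ag \<Rightarrow> 'o obj set"

definition choice_history :: "'o history \<Rightarrow> bool" where
  "choice_history h \<longleftrightarrow> (\<forall>p \<in> set h. snd p \<in> fst p)"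

definition empty_history :: "('ag, 'o) coll_history" where
  "empty_history = (\<lambda>_. [])"

definition menu_function :: "('ag, 'o) menu_fun \<Rightarrow> bool" where
  "menu_function S \<longleftrightarrow>
     (\<forall>a. S empty_history a \<noteq> {}) \<and>
     (\<forall>h. (\<forall>a. choice_history (h a)) \<and> h \<noteq> empty_history \<longrightarrow>
        (\<forall>a. h a \<noteq> [] \<longrightarrow> S h a \<subseteq> fst (last (h a)) - {snd (last (h a))}))"

definition best :: "'o pref \<Rightarrow> 'o obj set \<Rightarrow> 'o obj" where
  "best R M = (THE x. x \<in> M \<and> (\<forall>y \<in> M. y \<noteq> x \<longrightarrow> R x y))"

text \<open>One period of the mechanism under straightforward play: every agent with a
  non-empty menu picks her most preferred element of it.\<close>
definition mech_step :: "('ag, 'o) menu_fun \<Rightarrow> ('ag, 'o) profile \<Rightarrow> ('ag, 'o) coll_history \<Rightarrow> ('ag, 'o) coll_history" where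
  "mech_step S P h = (\<lambda>a. if S h a = {} then h a else h a @ [(S h a, best (P a) (S h a))])"

definition mech_hist :: "('ag, 'o) menu_fun \<Rightarrow> ('ag, 'o) profile \<Rightarrow> nat \<Rightarrow> ('ag, 'o) coll_history" where
  "mech_hist S P t = (mech_step S P ^^ t) empty_history"

text \<open>The mechanism stops at the (first) history where all menus are empty (such a history
  is a fixpoint of mech_step, hence unique), and each agent gets her last choice.\<close>
definition sequentializes :: "('ag, 'o) menu_fun \<Rightarrow> ('ag, 'o) rule \<Rightarrow> bool" where
  "sequentializes S \<phi> \<longleftrightarrow>
     (\<forall>P. is_profile P \<longrightarrow>
        (\<exists>t. (\<forall>a. S (mech_hist S P t) a = {}) \<and>
             (\<forall>a. snd (last (mech_hist S P t a)) = \<phi> P a)))"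

end

theory Submission
  imports Defs
begin

lemma sp_irrefl: "strict_pref R \<Longrightarrow> \<not> R x x" by (simp add: strict_pref_def)
lemma sp_trans: "strict_pref R \<Longrightarrow> R x y \<Longrightarrow> R y z \<Longrightarrow> R x z" unfolding strict_pref_def by blast
lemma sp_total: "strict_pref R \<Longrightarrow> x \<noteq> y \<Longrightarrow> R x y \<or> R y x" unfolding strict_pref_def by blast
lemma sp_asym: "strict_pref R \<Longrightarrow> R x y \<Longrightarrow> \<not> R y x" unfolding strict_pref_def by blast

lemma best_ex:
  assumes "finite M" "M \<noteq> {}" "strict_pref R"
  shows "\<exists>x\<in>M. \<forall>y\<in>M. y \<noteq> x \<longrightarrow> R x y"
  using assms(1,2)
proof (induction M rule: finite_ne_induct)
  case (singleton x) then show ?case by auto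
next
  case (insert x F)
  then obtain m where m: "m \<in> F" "\<forall>y\<in>F. y \<noteq> m \<longrightarrow> R m y" by blast
  show ?case
  proof (cases "R x m")
    case True
    have "\<forall>y\<in>insert x F. y \<noteq> x \<longrightarrow> R x y"
    proof (intro ballI impI)
      fix y assume "y \<in> insert x F" "y \<noteq> x"
      then have "y \<in> F" by simp
      show "R x y"
      proof (cases "y = m")
        case True then show ?thesis using \<open>R x m\<close> by simp
      next
        case False then show ?thesis using m \<open>y \<in> F\<close> \<open>R x m\<close> sp_trans[OF assms(3)] by blast
      qed
    qed
    then show ?thesis by blast
  next
    case False
    then have "m \<noteq> x \<Longrightarrow> R m x" using sp_total[OF assms(3)] by blast
    then show ?thesis using m by (intro bexI[of _ m]) auto
  qed
qed

lemma best_eq: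
  assumes "strict_pref R" "x \<in> M" "\<forall>y\<in>M. y \<noteq> x \<longrightarrow> R x y"
  shows "best R M = x"
  unfolding best_def
proof (rule the_equality)
  show "x \<in> M \<and> (\<forall>y\<in>M. y \<noteq> x \<longrightarrow> R x y)" using assms by blast
next
  fix z assume "z \<in> M \<and> (\<forall>y\<in>M. y \<noteq> z \<longrightarrow> R z y)"
  then show "z = x"
  proof -
    assume z: "z \<in> M \<and> (\<forall>y\<in>M. y \<noteq> z \<longrightarrow> R z y)"
    show "z = x"
    proof (rule ccontr)
      assume "z \<noteq> x"
      then have "R x z" "R z x" using z assms(2,3) by auto
      then show False using sp_asym[OF assms(1)] by blast
    qed
  qed
qed

lemma best_prop:
  assumes "finite M" "M \<noteq> {}" "strict_pref R"
  shows "best R M \<in> M" "\<And>y. y \<in> M \<Longrightarrow> y \<noteq> best R M \<Longrightarrow> R (best R M) y"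
proof -
  obtain x where x: "x \<in> M" "\<forall>y\<in>M. y \<noteq> x \<longrightarrow> R x y" using best_ex[OF assms] by blast
  have "best R M = x" using best_eq[OF assms(3) x] .
  then show "best R M \<in> M" "\<And>y. y \<in> M \<Longrightarrow> y \<noteq> best R M \<Longrightarrow> R (best R M) y" using x by auto
qed

definition cons_hist :: "'o pref \<Rightarrow> 'o history \<Rightarrow> bool" where
  "cons_hist R h \<longleftrightarrow> (\<forall>p\<in>set h. \<forall>x\<in>fst p. weak_pref R (snd p) x)"

lemma mech_hist_0: "mech_hist S P 0 = empty_history" by (simp add: mech_hist_def)
lemma mech_hist_Suc: "mech_hist S P (Suc j) = mech_step S P (mech_hist S P j)"
  by (simp add: mech_hist_def)

lemma hist_generic:
  fixes S :: "('ag, 'o::finite) menu_fun"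
  assumes "is_profile P"
  shows "choice_history (mech_hist S P j a) \<and> cons_hist (P a) (mech_hist S P j a)"
proof (induction j)
  case 0 then show ?case by (simp add: mech_hist_0 empty_history_def choice_history_def cons_hist_def)
next
  case (Suc j)
  have sp: "strict_pref (P a)" using assms by (simp add: is_profile_def)
  show ?case
  proof (cases "S (mech_hist S P j) a = {}")
    case True
    then have "mech_hist S P (Suc j) a = mech_hist S P j a" by (simp add: mech_hist_Suc mech_step_def)
    then show ?thesis using Suc by simp
  next
    case False
    define M where "M = S (mech_hist S P j) a"
    have M: "M \<noteq> {}" using False M_def by simp
    have e: "mech_hist S P (Suc j) a = mech_hist S P j a @ [(M, best (P a) M)]"
      using False by (simp add: mech_hist_Suc mech_step_def M_def)
    note bp = best_prop[OF finite M sp]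
    have c1: "choice_history [(M, best (P a) M)]" using bp(1) by (simp add: choice_history_def)
    have c2: "cons_hist (P a) [(M, best (P a) M)]" using bp(2) by (auto simp add: cons_hist_def weak_pref_def)
    show ?thesis using Suc c1 c2 unfolding e choice_history_def cons_hist_def by auto
  qed
qed

lemma fixpoint:
  assumes "\<forall>a. S (mech_hist S P t) a = {}" "t \<le> n"
  shows "mech_hist S P n = mech_hist S P t"
  using assms(2)
proof (induction n rule: dec_induct)
  case base then show ?case by simp
next
  case (step n)
  then show ?case using assms(1) by (simp add: mech_hist_Suc mech_step_def)
qed


lemma best_agree:
  assumes sp: "strict_pref Pa" and sq: "strict_pref Qa"
    and up: "\<forall>x. Qa x m \<longleftrightarrow> Pa x m"
    and ag: "\<forall>x y. Pa x m \<longrightarrow> Pa y m \<longrightarrow> (Qa x y \<longleftrightarrow> Pa x y)"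
    and fin: "finite M" and ne: "M \<noteq> {}" and w: "weak_pref Pa (best Pa M) m"
  shows "best Qa M = best Pa M"
proof -
  define b where "b = best Pa M"
  note bp = best_prop[OF fin ne sp, folded b_def]
  have "\<forall>y\<in>M. y \<noteq> b \<longrightarrow> Qa b y"
  proof (intro ballI impI)
    fix y assume y: "y \<in> M" "y \<noteq> b"
    then have Pby: "Pa b y" using bp by blast
    show "Qa b y"
    proof (cases "b = m")
      case True
      then have "\<not> Pa y m" using Pby sp_asym[OF sp] by blast
      then have "\<not> Qa y m" using up by blast
      then show ?thesis using True y sp_total[OF sq, of y m] by blast
    next
      case False
      then have Pbm: "Pa b m" using w b_def by (simp add: weak_pref_def)
      then have Qbm: "Qa b m" using up by blast
      show ?thesis
      proof (cases "Pa y m")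
        case True then show ?thesis using ag Pbm Pby by blast
      next
        case False
        then have nq: "\<not> Qa y m" using up by blast
        show ?thesis
        proof (cases "y = m")
          case True then show ?thesis using Qbm by simp
        next
          case False
          then have "Qa m y" using nq sp_total[OF sq, of y m] by blast
          then show ?thesis using Qbm sp_trans[OF sq] by blast
        qed
      qed
    qed
  qed
  then show ?thesis using best_eq[OF sq bp(1)] b_def by simp
qed

lemma lower_contourD:
  assumes "P' \<in> lower_contour P \<mu>"
  shows "is_profile P'" "\<And>b. \<forall>x. P' b x (\<mu> b) \<longleftrightarrow> P b x (\<mu> b)"
    "\<And>b. \<forall>x y. P b x (\<mu> b) \<longrightarrow> P b y (\<mu> b) \<longrightarrow> (P' b x y \<longleftrightarrow> P b x y)"
proof -
  show "is_profile P'" using assms by (simp add: lower_contour_def)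
  fix b
  have "{x. P' b x (\<mu> b)} = {x. P b x (\<mu> b)}" using assms by (simp add: lower_contour_def)
  then show "\<forall>x. P' b x (\<mu> b) \<longleftrightarrow> P b x (\<mu> b)" by (simp add: set_eq_iff)
  show "\<forall>x y. P b x (\<mu> b) \<longrightarrow> P b y (\<mu> b) \<longrightarrow> (P' b x y \<longleftrightarrow> P b x y)"
    using assms by (simp add: lower_contour_def)
qed

lemma coincide:
  fixes S :: "('ag, 'o::finite) menu_fun"
  assumes P: "is_profile P" and L: "P' \<in> lower_contour P \<mu>"
    and nb: "\<forall>i<k. \<forall>b. S (mech_hist S P i) b \<noteq> {} \<longrightarrow>
               weak_pref (P b) (best (P b) (S (mech_hist S P i) b)) (\<mu> b)"
  shows "mech_hist S P' k = mech_hist S P k"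
  using nb
proof (induction k)
  case 0 then show ?case by (simp add: mech_hist_0)
next
  case (Suc k)
  then have IH: "mech_hist S P' k = mech_hist S P k" by simp
  have P': "is_profile P'" using lower_contourD(1)[OF L] .
  have "mech_step S P' (mech_hist S P k) = mech_step S P (mech_hist S P k)"
  proof (rule ext)
    fix b
    show "mech_step S P' (mech_hist S P k) b = mech_step S P (mech_hist S P k) b"
    proof (cases "S (mech_hist S P k) b = {}")
      case True then show ?thesis by (simp add: mech_step_def)
    next
      case False
      have w: "weak_pref (P b) (best (P b) (S (mech_hist S P k) b)) (\<mu> b)"
        using Suc.prems False by simp
      have sp: "strict_pref (P b)" using P by (simp add: is_profile_def)
      have sq: "strict_pref (P' b)" using P' by (simp add: is_profile_def)
      have "best (P' b) (S (mech_hist S P k) b) = best (P b) (S (mech_hist S P k) b)"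
        using best_agree[OF sp sq lower_contourD(2)[OF L] lower_contourD(3)[OF L] finite False w] .
      then show ?thesis by (simp add: mech_step_def)
    qed
  qed
  then show ?case using IH by (simp add: mech_hist_Suc)
qed

lemma confine:
  fixes S :: "('ag, 'o::finite) menu_fun"
  assumes S: "menu_function S" and P: "is_profile P"
    and ne: "S (mech_hist S P k) b \<noteq> {}" and n: "Suc k \<le> n"
  shows "mech_hist S P n b \<noteq> [] \<and> fst (last (mech_hist S P n b)) \<subseteq> S (mech_hist S P k) b
         \<and> snd (last (mech_hist S P n b)) \<in> S (mech_hist S P k) b"
  using n
proof (induction n rule: dec_induct)
  case base
  have sp: "strict_pref (P b)" using P by (simp add: is_profile_def)
  have e: "mech_hist S P (Suc k) b = mech_hist S P k b @ [(S (mech_hist S P k) b, best (P b) (S (mech_hist S P k) b))]"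
    using ne by (simp add: mech_hist_Suc mech_step_def)
  show ?case using e best_prop(1)[OF finite ne sp] by simp
next
  case (step n)
  let ?h = "mech_hist S P n"
  have sp: "strict_pref (P b)" using P by (simp add: is_profile_def)
  show ?case
  proof (cases "S ?h b = {}")
    case True
    then have "mech_hist S P (Suc n) b = ?h b" by (simp add: mech_hist_Suc mech_step_def)
    then show ?thesis using step.IH by simp
  next
    case False
    have e: "mech_hist S P (Suc n) b = ?h b @ [(S ?h b, best (P b) (S ?h b))]"
      using False by (simp add: mech_hist_Suc mech_step_def)
    have ch: "\<forall>a. choice_history (?h a)" using hist_generic[OF P] by blast
    have hne: "?h \<noteq> empty_history" using step.IH by (auto simp: empty_history_def)
    have "S ?h b \<subseteq> fst (last (?h b)) - {snd (last (?h b))}"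
      using S ch hne step.IH unfolding menu_function_def by blast
    then have sub: "S ?h b \<subseteq> S (mech_hist S P k) b" using step.IH by blast
    show ?thesis using e sub best_prop(1)[OF finite False sp] by auto
  qed
qed

lemma seq_imp_md:
  fixes S :: "('ag, 'o::finite) menu_fun"
  assumes S: "menu_function S" and seq: "sequentializes S \<phi>"
  shows "monotonic_discoverability \<phi>"
  unfolding monotonic_discoverability_def
proof (intro allI impI)
  fix \<mu> :: "('ag, 'o) allocation" and P :: "('ag, 'o) profile"
  assume P: "is_profile P"
  show "\<phi> P = \<mu> \<or> (\<exists>a. \<forall>P'\<in>lower_contour P \<mu>. \<phi> P' a \<noteq> \<mu> a)"
  proof (cases "\<phi> P = \<mu>")
    case True then show ?thesis by simp
  next
    case neq: False
    obtain T where T: "\<forall>a. S (mech_hist S P T) a = {}" "\<forall>a. snd (last (mech_hist S P T a)) = \<phi> P a"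
      using seq P unfolding sequentializes_def by blast
    define bad where "bad i = (\<exists>b. S (mech_hist S P i) b \<noteq> {} \<and>
               \<not> weak_pref (P b) (best (P b) (S (mech_hist S P i) b)) (\<mu> b))" for i
    show ?thesis
    proof (cases "\<exists>i. bad i")
      case True
      define k where "k = (LEAST i. bad i)"
      have bk: "bad k" unfolding k_def using True by (rule LeastI_ex)
      have nb: "\<forall>i<k. \<not> bad i" by (auto simp: k_def dest: not_less_Least)
      obtain b where b: "S (mech_hist S P k) b \<noteq> {}"
        "\<not> weak_pref (P b) (best (P b) (S (mech_hist S P k) b)) (\<mu> b)"
        using bk unfolding bad_def by blast
      have sp: "strict_pref (P b)" using P by (simp add: is_profile_def)
      have notin: "\<mu> b \<notin> S (mech_hist S P k) b"
      proof
        assume m: "\<mu> b \<in> S (mech_hist S P k) b"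
        have ne: "\<mu> b \<noteq> best (P b) (S (mech_hist S P k) b)" using b(2) by (auto simp: weak_pref_def)
        then have "P b (best (P b) (S (mech_hist S P k) b)) (\<mu> b)"
          using best_prop(2)[OF finite b(1) sp m] by simp
        then show False using b(2) by (simp add: weak_pref_def)
      qed
      have "\<forall>P'\<in>lower_contour P \<mu>. \<phi> P' b \<noteq> \<mu> b"
      proof
        fix P' assume L: "P' \<in> lower_contour P \<mu>"
        have P': "is_profile P'" using lower_contourD(1)[OF L] .
        have nb2: "\<forall>i<k. \<forall>b. S (mech_hist S P i) b \<noteq> {} \<longrightarrow>
               weak_pref (P b) (best (P b) (S (mech_hist S P i) b)) (\<mu> b)"
          using nb unfolding bad_def by blast
        have co: "mech_hist S P' k = mech_hist S P k"
          using coincide[OF P L nb2] .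
        obtain T' where T': "\<forall>a. S (mech_hist S P' T') a = {}" "\<forall>a. snd (last (mech_hist S P' T' a)) = \<phi> P' a"
          using seq P' unfolding sequentializes_def by blast
        have "Suc k \<le> T'"
        proof (rule ccontr)
          assume "\<not> Suc k \<le> T'"
          then have "T' \<le> k" by simp
          then have "mech_hist S P' k = mech_hist S P' T'" using fixpoint[of S P' T', OF T'(1)] by blast
          then show False using T'(1) b(1) co by metis
        qed
        then have "snd (last (mech_hist S P' T' b)) \<in> S (mech_hist S P k) b"
          using confine[OF S P', of k b T'] b(1) co by simp
        then show "\<phi> P' b \<noteq> \<mu> b" using T'(2) notin by metis
      qed
      then show ?thesis by blast
    next
      case False
      have "\<exists>a. \<phi> P a \<noteq> \<mu> a" using neq by (auto simp: fun_eq_iff)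
      then obtain a where a: "\<phi> P a \<noteq> \<mu> a" by blast
      have "\<forall>P'\<in>lower_contour P \<mu>. \<phi> P' a \<noteq> \<mu> a"
      proof
        fix P' assume L: "P' \<in> lower_contour P \<mu>"
        have P': "is_profile P'" using lower_contourD(1)[OF L] .
        have nb2: "\<And>k. \<forall>i<k. \<forall>b. S (mech_hist S P i) b \<noteq> {} \<longrightarrow>
               weak_pref (P b) (best (P b) (S (mech_hist S P i) b)) (\<mu> b)"
          using False unfolding bad_def by blast
        have co: "\<And>i. mech_hist S P' i = mech_hist S P i"
          using coincide[OF P L nb2] .
        obtain T' where T': "\<forall>a. S (mech_hist S P' T') a = {}" "\<forall>a. snd (last (mech_hist S P' T' a)) = \<phi> P' a"
          using seq P' unfolding sequentializes_def by blast
        have T1: "\<forall>a. S (mech_hist S P' T) a = {}" using T(1) co by simp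
        have "mech_hist S P' (max T T') = mech_hist S P' T'" using fixpoint[of S P' T' "max T T'", OF T'(1)] by simp
        moreover have "mech_hist S P' (max T T') = mech_hist S P' T" using fixpoint[of S P' T "max T T'", OF T1] by simp
        ultimately have "mech_hist S P' T' = mech_hist S P T" using co by simp
        then have "\<phi> P' a = \<phi> P a" using T(2) T'(2) by metis
        then show "\<phi> P' a \<noteq> \<mu> a" using a by simp
      qed
      then show ?thesis by blast
    qed
  qed
qed


definition consistent :: "('ag, 'o) profile \<Rightarrow> ('ag, 'o) coll_history \<Rightarrow> bool" where
  "consistent Q h \<longleftrightarrow> is_profile Q \<and> (\<forall>b. cons_hist (Q b) (h b))"

definition contf :: "('ag, 'o) rule \<Rightarrow> ('ag, 'o) coll_history \<Rightarrow> 'ag \<Rightarrow> bool" where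
  "contf \<phi> h a \<longleftrightarrow> (\<forall>Q. consistent Q h \<longrightarrow> \<phi> Q a \<noteq> snd (last (h a)))"

definition Sm :: "('ag, 'o) rule \<Rightarrow> ('ag, 'o) menu_fun" where
  "Sm \<phi> h a = (if h a = [] then UNIV else if contf \<phi> h a then fst (last (h a)) - {snd (last (h a))} else {})"

definition agent_inv :: "'o pref \<Rightarrow> 'o history \<Rightarrow> 'o obj \<Rightarrow> bool" where
  "agent_inv Pa h z \<longleftrightarrow> h \<noteq> [] \<and>
     fst (last h) = {x. x = snd (last h) \<or> Pa (snd (last h)) x} \<and>
     (\<forall>Q. strict_pref Q \<and> cons_hist Q h \<longrightarrow>
        (\<forall>x. Q x (snd (last h)) \<longleftrightarrow> Pa x (snd (last h))) \<and>
        (\<forall>x y. Pa x (snd (last h)) \<longrightarrow> Pa y (snd (last h)) \<longrightarrow> (Q x y \<longleftrightarrow> Pa x y))) \<and>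
     z \<in> fst (last h) \<and>
     length h + card (fst (last h)) = card (UNIV :: 'o obj set) + 1"

lemma Sm_menu: "menu_function (Sm \<phi>)"
  unfolding menu_function_def by (auto simp: Sm_def empty_history_def)

lemma cons_hist_append: "cons_hist Q (h @ [p]) \<longleftrightarrow> cons_hist Q h \<and> (\<forall>x\<in>fst p. weak_pref Q (snd p) x)"
  by (auto simp: cons_hist_def)

lemma inv_base:
  fixes Pa :: "'o::finite pref"
  assumes sp: "strict_pref Pa"
  shows "agent_inv Pa [(UNIV, best Pa UNIV)] z"
proof -
  define c where "c = best Pa (UNIV :: 'o obj set)"
  note bp = best_prop[OF finite UNIV_not_empty sp, folded c_def]
  have U: "(UNIV :: 'o obj set) = {x. x = c \<or> Pa c x}" using bp by blast
  have nP: "\<And>x. \<not> Pa x c"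
  proof -
    fix x show "\<not> Pa x c"
    proof (cases "x = c")
      case True then show ?thesis using sp_irrefl[OF sp] by simp
    next
      case False then show ?thesis using bp(2)[of x] sp_asym[OF sp] by blast
    qed
  qed
  have Q: "(\<forall>x. Q x c \<longleftrightarrow> Pa x c) \<and> (\<forall>x y. Pa x c \<longrightarrow> Pa y c \<longrightarrow> (Q x y \<longleftrightarrow> Pa x y))"
    if "strict_pref Q" "cons_hist Q [(UNIV, c)]" for Q
  proof -
    have w: "\<And>x. weak_pref Q c x" using that(2) by (simp add: cons_hist_def)
    have "\<And>x. \<not> Q x c"
    proof -
      fix x show "\<not> Q x c"
        using w[of x] sp_asym[OF that(1)] sp_irrefl[OF that(1)] unfolding weak_pref_def by metis
    qed
    then show ?thesis using nP by blast
  qed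
  show ?thesis unfolding agent_inv_def c_def[symmetric] using U Q by simp
qed

lemma inv_step:
  fixes Pa :: "'o::finite pref"
  assumes sp: "strict_pref Pa" and I: "agent_inv Pa h z"
    and M: "M = fst (last h) - {snd (last h)}" and Mne: "M \<noteq> {}"
    and zc: "z \<noteq> snd (last h)"
  shows "agent_inv Pa (h @ [(M, best Pa M)]) z"
proof -
  define c where "c = snd (last h)"
  define R where "R = fst (last h)"
  define c' where "c' = best Pa M"
  have hne: "h \<noteq> []" using I by (simp add: agent_inv_def)
  have R: "R = {x. x = c \<or> Pa c x}" using I by (simp add: agent_inv_def R_def c_def)
  have old: "\<And>Q. strict_pref Q \<Longrightarrow> cons_hist Q h \<Longrightarrow>
        (\<forall>x. Q x c \<longleftrightarrow> Pa x c) \<and> (\<forall>x y. Pa x c \<longrightarrow> Pa y c \<longrightarrow> (Q x y \<longleftrightarrow> Pa x y))"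
    using I by (simp add: agent_inv_def c_def)
  have zR: "z \<in> R" using I unfolding agent_inv_def R_def by blast
  have len: "length h + card R = card (UNIV :: 'o obj set) + 1" using I unfolding agent_inv_def R_def by (elim conjE)
  have Meq: "M = {x. Pa c x}" using M R sp_irrefl[OF sp] unfolding R_def c_def by auto
  note bp = best_prop[OF finite Mne sp, folded c'_def]
  have cc': "Pa c c'" using bp(1) Meq by simp
  have top: "\<And>y. y \<in> M \<Longrightarrow> y \<noteq> c' \<Longrightarrow> Pa c' y" using bp(2) by blast
  have M2: "M = {x. x = c' \<or> Pa c' x}"
  proof
    show "M \<subseteq> {x. x = c' \<or> Pa c' x}" using top by blast
    show "{x. x = c' \<or> Pa c' x} \<subseteq> M" using bp(1) Meq cc' sp_trans[OF sp] by blast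
  qed
  have above: "\<And>x. Pa x c' \<Longrightarrow> x = c \<or> Pa x c"
  proof -
    fix x assume x: "Pa x c'"
    show "x = c \<or> Pa x c"
    proof (rule ccontr)
      assume "\<not> (x = c \<or> Pa x c)"
      then have "Pa c x" using sp_total[OF sp, of x c] by blast
      then have "x \<in> M" using Meq by simp
      moreover have "x \<noteq> c'" using x sp_irrefl[OF sp] by blast
      ultimately have "Pa c' x" using top by blast
      then show False using x sp_asym[OF sp] by blast
    qed
  qed
  have below: "\<And>x. x = c \<or> Pa x c \<Longrightarrow> Pa x c'"
    using cc' sp_trans[OF sp] by blast
  have newQ: "(\<forall>x. Q x c' \<longleftrightarrow> Pa x c') \<and> (\<forall>x y. Pa x c' \<longrightarrow> Pa y c' \<longrightarrow> (Q x y \<longleftrightarrow> Pa x y))"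
    if sq: "strict_pref Q" and ch: "cons_hist Q (h @ [(M, c')])" for Q
  proof -
    have chh: "cons_hist Q h" and wM: "\<forall>x\<in>M. weak_pref Q c' x"
      using ch by (auto simp: cons_hist_append)
    note o = old[OF sq chh]
    have "last h \<in> set h" using hne by simp
    then have wR: "\<forall>x\<in>R. weak_pref Q c x" using chh unfolding cons_hist_def R_def c_def by blast
    have c'R: "c' \<in> R" using R cc' by simp
    have c'c: "c' \<noteq> c" using cc' sp_irrefl[OF sp] by blast
    have Qcc': "Q c c'" using wR c'R c'c by (auto simp: weak_pref_def)
    have A: "\<forall>x. Q x c' \<longleftrightarrow> Pa x c'"
    proof
      fix x show "Q x c' \<longleftrightarrow> Pa x c'"
      proof
        assume q: "Q x c'"
        show "Pa x c'"
        proof (rule ccontr)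
          assume "\<not> Pa x c'"
          moreover have "x \<noteq> c'" using q sp_irrefl[OF sq] by blast
          ultimately have "Pa c' x" using sp_total[OF sp, of x c'] by blast
          then have "x \<in> M" using M2 by simp
          then have "Q c' x" using wM \<open>x \<noteq> c'\<close> by (auto simp: weak_pref_def)
          then show False using q sp_asym[OF sq] by blast
        qed
      next
        assume p: "Pa x c'"
        then have "x = c \<or> Pa x c" using above by blast
        then show "Q x c'"
        proof
          assume "x = c" then show ?thesis using Qcc' by simp
        next
          assume "Pa x c" then have "Q x c" using o by blast
          then show ?thesis using Qcc' sp_trans[OF sq] by blast
        qed
      qed
    qed
    have B: "\<forall>x y. Pa x c' \<longrightarrow> Pa y c' \<longrightarrow> (Q x y \<longleftrightarrow> Pa x y)"
    proof (intro allI impI)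
      fix x y assume x: "Pa x c'" and y: "Pa y c'"
      have xc: "x = c \<or> Pa x c" using above x by blast
      have yc: "y = c \<or> Pa y c" using above y by blast
      show "Q x y \<longleftrightarrow> Pa x y"
      proof (cases "x = c")
        case True
        show ?thesis
        proof (cases "y = c")
          case True then show ?thesis using \<open>x = c\<close> sp_irrefl[OF sp] sp_irrefl[OF sq] by simp
        next
          case False
          then have Pyc: "Pa y c" using yc by blast
          then have "Q y c" using o by blast
          then show ?thesis using True Pyc sp_asym[OF sp] sp_asym[OF sq] by blast
        qed
      next
        case False
        then have Pxc: "Pa x c" using xc by blast
        show ?thesis
        proof (cases "y = c")
          case True
          have "Q x c" using o Pxc by blast
          then show ?thesis using True Pxc by simp
        next
          case False
          then have "Pa y c" using yc by blast
          then show ?thesis using o Pxc by blast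
        qed
      qed
    qed
    show ?thesis using A B by blast
  qed
  have zM: "z \<in> M" using zR zc M unfolding R_def c_def by blast
  have cR: "c \<in> R" using R by simp
  have cardM: "card M = card R - 1" using M cR unfolding R_def c_def by (simp add: card_Diff_singleton)
  have "R \<noteq> {}" using cR by blast
  then have cardR: "card R \<ge> 1" using card_gt_0_iff[of R] by (simp add: Suc_le_eq)
  have len2: "length (h @ [(M, c')]) + card M = card (UNIV :: 'o obj set) + 1"
    using len cardM cardR by simp
  show ?thesis unfolding agent_inv_def c'_def[symmetric] using M2 newQ zM len2
    by simp
qed


lemma seq_inv:
  fixes \<phi> :: "('ag, 'o::finite) rule"
  assumes P: "is_profile P"
  shows "\<forall>a. agent_inv (P a) (mech_hist (Sm \<phi>) P (Suc j) a) (\<phi> P a)"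
proof (induction j)
  case 0
  show ?case
  proof
    fix a
    have sp: "strict_pref (P a)" using P by (simp add: is_profile_def)
    have "mech_hist (Sm \<phi>) P (Suc 0) a = [(UNIV, best (P a) UNIV)]"
      by (simp add: mech_hist_Suc mech_hist_0 mech_step_def Sm_def empty_history_def)
    then show "agent_inv (P a) (mech_hist (Sm \<phi>) P (Suc 0) a) (\<phi> P a)" using inv_base[OF sp] by simp
  qed
next
  case (Suc j)
  define h where "h = mech_hist (Sm \<phi>) P (Suc j)"
  have IH: "\<And>a. agent_inv (P a) (h a) (\<phi> P a)" using Suc h_def by blast
  show ?case
  proof
    fix a
    have sp: "strict_pref (P a)" using P by (simp add: is_profile_def)
    have e: "mech_hist (Sm \<phi>) P (Suc (Suc j)) a = mech_step (Sm \<phi>) P h a"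
      by (simp add: mech_hist_Suc h_def)
    show "agent_inv (P a) (mech_hist (Sm \<phi>) P (Suc (Suc j)) a) (\<phi> P a)"
    proof (cases "Sm \<phi> h a = {}")
      case True
      then show ?thesis using e IH by (simp add: mech_step_def)
    next
      case False
      have hne: "h a \<noteq> []" using IH[of a] by (simp add: agent_inv_def)
      have ct: "contf \<phi> h a" using False hne by (simp add: Sm_def split: if_splits)
      have Meq: "Sm \<phi> h a = fst (last (h a)) - {snd (last (h a))}" using hne ct by (simp add: Sm_def)
      have cons: "consistent P h" unfolding consistent_def h_def using P hist_generic[OF P] by blast
      have zc: "\<phi> P a \<noteq> snd (last (h a))" using ct cons by (simp add: contf_def)
      have "mech_hist (Sm \<phi>) P (Suc (Suc j)) a = h a @ [(Sm \<phi> h a, best (P a) (Sm \<phi> h a))]"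
        using e False by (simp add: mech_step_def)
      then show ?thesis using inv_step[OF sp IH[of a] Meq False zc] by simp
    qed
  qed
qed

lemma len_step:
  "length (mech_hist S P j a) \<le> length (mech_hist S P (Suc j) a)"
  "S (mech_hist S P j) a \<noteq> {} \<Longrightarrow> length (mech_hist S P (Suc j) a) = Suc (length (mech_hist S P j a))"
  by (auto simp: mech_hist_Suc mech_step_def)

lemma sum_grow:
  fixes S :: "('ag::finite, 'o) menu_fun"
  shows "(\<forall>i<j. \<exists>a. S (mech_hist S P i) a \<noteq> {}) \<Longrightarrow> j \<le> (\<Sum>a\<in>UNIV. length (mech_hist S P j a))"
proof (induction j)
  case 0 then show ?case by simp
next
  case (Suc j)
  then have IH: "j \<le> (\<Sum>a\<in>UNIV. length (mech_hist S P j a))" by simp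
  obtain a0 where a0: "S (mech_hist S P j) a0 \<noteq> {}" using Suc.prems by blast
  have "(\<Sum>a\<in>UNIV. length (mech_hist S P j a)) < (\<Sum>a\<in>UNIV. length (mech_hist S P (Suc j) a))"
  proof (rule sum_strict_mono_ex1)
    show "finite (UNIV :: 'ag set)" by simp
    show "\<forall>x\<in>UNIV. length (mech_hist S P j x) \<le> length (mech_hist S P (Suc j) x)" by (intro ballI len_step(1))
    show "\<exists>a\<in>UNIV. length (mech_hist S P j a) < length (mech_hist S P (Suc j) a)"
      using len_step(2)[of S P j a0, OF a0] by (intro bexI[of _ a0]) auto
  qed
  then show ?case using IH by simp
qed

lemma md_imp_seq:
  fixes \<phi> :: "('ag::finite, 'o::finite) rule"
  assumes md: "monotonic_discoverability \<phi>"
  shows "sequentializes (Sm \<phi>) \<phi>"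
  unfolding sequentializes_def
proof (intro allI impI)
  fix P :: "('ag, 'o) profile"
  assume P: "is_profile P"
  define S where "S = Sm \<phi>"
  define N where "N = card (UNIV :: 'o obj set) + 1"
  define K where "K = card (UNIV :: 'ag set) * N"
  have lenb: "\<And>j a. length (mech_hist S P j a) \<le> N"
  proof -
    fix j a show "length (mech_hist S P j a) \<le> N"
    proof (cases j)
      case 0 then show ?thesis by (simp add: mech_hist_0 empty_history_def)
    next
      case (Suc j')
      have "agent_inv (P a) (mech_hist S P j a) (\<phi> P a)" using seq_inv[OF P, of \<phi> j'] Suc S_def by simp
      then show ?thesis unfolding agent_inv_def N_def by linarith
    qed
  qed
  have sb: "\<And>j. (\<Sum>a\<in>UNIV. length (mech_hist S P j a)) \<le> K"
  proof -
    fix j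
    have "(\<Sum>a\<in>UNIV. length (mech_hist S P j a)) \<le> of_nat (card (UNIV :: 'ag set)) * N"
      by (rule sum_bounded_above) (use lenb in blast)
    then show "(\<Sum>a\<in>UNIV. length (mech_hist S P j a)) \<le> K" by (simp add: K_def)
  qed
  have "\<not> (\<forall>i<Suc K. \<exists>a. S (mech_hist S P i) a \<noteq> {})"
  proof
    assume "\<forall>i<Suc K. \<exists>a. S (mech_hist S P i) a \<noteq> {}"
    then have "Suc K \<le> (\<Sum>a\<in>UNIV. length (mech_hist S P (Suc K) a))" by (rule sum_grow)
    then show False using sb[of "Suc K"] by simp
  qed
  then obtain t where t: "\<forall>a. S (mech_hist S P t) a = {}" by blast
  have "t \<noteq> 0"
  proof
    assume "t = 0"
    then have "S (mech_hist S P t) undefined = UNIV" by (simp add: S_def Sm_def mech_hist_0 empty_history_def)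
    then show False using t by simp
  qed
  then obtain j where tj: "t = Suc j" using not0_implies_Suc by blast
  define H where "H = mech_hist S P t"
  have I: "\<And>a. agent_inv (P a) (H a) (\<phi> P a)" using seq_inv[OF P, of \<phi> j] tj H_def S_def by simp
  have out: "\<forall>a. snd (last (H a)) = \<phi> P a"
  proof (rule ccontr)
    assume "\<not> (\<forall>a. snd (last (H a)) = \<phi> P a)"
    define c where "c = (\<lambda>a. snd (last (H a)))"
    have "\<phi> P \<noteq> c" using \<open>\<not> (\<forall>a. snd (last (H a)) = \<phi> P a)\<close> c_def by auto
    then obtain a0 where a0: "\<forall>P'\<in>lower_contour P c. \<phi> P' a0 \<noteq> c a0"
      using md P unfolding monotonic_discoverability_def by blast
    have ct: "contf \<phi> H a0"
      unfolding contf_def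
    proof (intro allI impI)
      fix Q assume Q: "consistent Q H"
      have Qp: "is_profile Q" using Q by (simp add: consistent_def)
      have Ib: "(\<forall>x. Q b x (c b) \<longleftrightarrow> P b x (c b)) \<and>
            (\<forall>x y. P b x (c b) \<longrightarrow> P b y (c b) \<longrightarrow> (Q b x y \<longleftrightarrow> P b x y))" for b
      proof -
        have sq: "strict_pref (Q b)" using Qp by (simp add: is_profile_def)
        have ch: "cons_hist (Q b) (H b)" using Q by (simp add: consistent_def)
        show ?thesis using I[of b] sq ch unfolding agent_inv_def c_def by blast
      qed
      have "Q \<in> lower_contour P c"
        unfolding lower_contour_def using Qp Ib by blast
      then show "\<phi> Q a0 \<noteq> snd (last (H a0))" using a0 c_def by simp
    qed
    have hne: "H a0 \<noteq> []" using I[of a0] by (simp add: agent_inv_def)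
    have "S H a0 = {}" using t H_def by simp
    then have emp: "fst (last (H a0)) - {snd (last (H a0))} = {}" using hne ct by (simp add: S_def Sm_def)
    have mem: "\<phi> P a0 \<in> fst (last (H a0))" using I[of a0] unfolding agent_inv_def by blast
    have cons: "consistent P H" unfolding consistent_def H_def using P hist_generic[OF P] by blast
    have "\<phi> P a0 \<noteq> snd (last (H a0))" using ct cons by (simp add: contf_def)
    then show False using emp mem by blast
  qed
  show "\<exists>t. (\<forall>a. Sm \<phi> (mech_hist (Sm \<phi>) P t) a = {}) \<and> (\<forall>a. snd (last (mech_hist (Sm \<phi>) P t a)) = \<phi> P a)"
    using t out H_def S_def by blast
qed

theorem theorem1:
  fixes \<phi> :: "('ag::finite, 'o::finite) rule"
  assumes "individually_rational \<phi>"
  shows "(\<exists>S. menu_function S \<and> sequentializes S \<phi>) \<longleftrightarrow> monotonic_discoverability \<phi>"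
proof
  assume "\<exists>S. menu_function S \<and> sequentializes S \<phi>"
  then obtain S where "menu_function S" "sequentializes S \<phi>" by blast
  then show "monotonic_discoverability \<phi>" by (rule seq_imp_md)
next
  assume "monotonic_discoverability \<phi>"
  then show "\<exists>S. menu_function S \<and> sequentializes S \<phi>" using Sm_menu md_imp_seq by blast
qed

end
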